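(* Let $B$ be a skew brace with multiplicative identity $1$ and $\mathrm{T}(B)$ its associated near-truss. Let $P$ be a non-empty subset of $B$. Then $P$ is a paragon in $\mathrm{T}(B)$ if and only if, for all $p\in P$, the set $P_p^1:=\{[q,p,1]\mid q\in P\}=\{q-p+1\mid q\in P\}$ is an ideal in $B$.
   Context: A skew brace is $(B,+,\cdot)$ with $(B,+)$ and $(B,\cdot)$ groups and $a(b+c)=ab-a+ac$. An ideal of a skew brace $B$ is a subset $B'$ such that $(B',+)$ is a normal subgroup of $(B,+)$, $aB'=B'a$ for all $a\in B$, and $ab-a\in B'$ for all $a\in B$, $b\in B'$. $\mathrm{T}(B)$ is $B$ with ternary operation $[a,b,c]=a-b+c$ and the multiplication of $B$. A normal sub-heap is a non-empty subset $S$ closed under $[-,-,-]$ with $[[a,e,s],a,e]\in S$ for all $a$ and $e,s\in S$; $a\sim_S b$ iff $[a,b,s]\in S$ for some (equivalently all) $s\in S$. A sub-heap $S$ is closed if $[ts',ts,s]\in S$ and $[s't,st,s]\in S$ for all $s,s'\in S$, $t$. A paragon is a non-empty normal sub-heap $P$ all of whose $\sim_P$-classes are closed sub-heaps. *)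

theory Defs
  imports "HOL-Algebra.Algebra"
begin

text \<open>A skew brace on the set B is given by two monoid records A (additive, written
  with mult A = +) and M (multiplicative) on the same carrier.\<close>

definition skew_brace :: "'a monoid \<Rightarrow> 'a monoid \<Rightarrow> bool" where
  "skew_brace A M \<longleftrightarrow> group A \<and> group M \<and> carrier A = carrier M \<and>
     (\<forall>a\<in>carrier A. \<forall>b\<in>carrier A. \<forall>c\<in>carrier A.
        a \<otimes>\<^bsub>M\<^esub> (b \<otimes>\<^bsub>A\<^esub> c) =
        ((a \<otimes>\<^bsub>M\<^esub> b) \<otimes>\<^bsub>A\<^esub> inv\<^bsub>A\<^esub> a) \<otimes>\<^bsub>A\<^esub> (a \<otimes>\<^bsub>M\<^esub> c))"

definition sb_ideal :: "'a monoid \<Rightarrow> 'a monoid \<Rightarrow> 'a set \<Rightarrow> bool" where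
  "sb_ideal A M I \<longleftrightarrow> I \<lhd> A \<and>
     (\<forall>a\<in>carrier A. (\<lambda>x. a \<otimes>\<^bsub>M\<^esub> x) ` I = (\<lambda>x. x \<otimes>\<^bsub>M\<^esub> a) ` I) \<and>
     (\<forall>a\<in>carrier A. \<forall>b\<in>I. (a \<otimes>\<^bsub>M\<^esub> b) \<otimes>\<^bsub>A\<^esub> inv\<^bsub>A\<^esub> a \<in> I)"

definition hbr :: "'a monoid \<Rightarrow> 'a \<Rightarrow> 'a \<Rightarrow> 'a \<Rightarrow> 'a" where
  "hbr A a b c = (a \<otimes>\<^bsub>A\<^esub> inv\<^bsub>A\<^esub> b) \<otimes>\<^bsub>A\<^esub> c"

definition subheap :: "'a monoid \<Rightarrow> 'a set \<Rightarrow> bool" where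
  "subheap A S \<longleftrightarrow> S \<noteq> {} \<and> S \<subseteq> carrier A \<and>
     (\<forall>x\<in>S. \<forall>y\<in>S. \<forall>z\<in>S. hbr A x y z \<in> S)"

definition normal_subheap :: "'a monoid \<Rightarrow> 'a set \<Rightarrow> bool" where
  "normal_subheap A S \<longleftrightarrow> subheap A S \<and>
     (\<forall>a\<in>carrier A. \<forall>e\<in>S. \<forall>s\<in>S. hbr A (hbr A a e s) a e \<in> S)"

definition heap_rel :: "'a monoid \<Rightarrow> 'a set \<Rightarrow> 'a \<Rightarrow> 'a \<Rightarrow> bool" where
  "heap_rel A S a b \<longleftrightarrow> (\<exists>s\<in>S. hbr A a b s \<in> S)"

definition heap_class :: "'a monoid \<Rightarrow> 'a set \<Rightarrow> 'a \<Rightarrow> 'a set" where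
  "heap_class A S a = {b \<in> carrier A. heap_rel A S a b}"

definition closed_subheap :: "'a monoid \<Rightarrow> 'a monoid \<Rightarrow> 'a set \<Rightarrow> bool" where
  "closed_subheap A M S \<longleftrightarrow> subheap A S \<and>
     (\<forall>s\<in>S. \<forall>s'\<in>S. \<forall>t\<in>carrier A.
        hbr A (t \<otimes>\<^bsub>M\<^esub> s') (t \<otimes>\<^bsub>M\<^esub> s) s \<in> S \<and>
        hbr A (s' \<otimes>\<^bsub>M\<^esub> t) (s \<otimes>\<^bsub>M\<^esub> t) s \<in> S)"

definition paragon :: "'a monoid \<Rightarrow> 'a monoid \<Rightarrow> 'a set \<Rightarrow> bool" where
  "paragon A M P \<longleftrightarrow> P \<noteq> {} \<and> normal_subheap A P \<and>
     (\<forall>a\<in>carrier A. closed_subheap A M (heap_class A P a))"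

end

theory Submission
  imports Defs
begin

locale sbr = A: group A + M: group M for A :: "'a monoid" (structure) and M :: "'a monoid" +
  assumes carr: "carrier M = carrier A"
  and distr: "\<And>a b c. a \<in> carrier A \<Longrightarrow> b \<in> carrier A \<Longrightarrow> c \<in> carrier A \<Longrightarrow>
     a \<otimes>\<^bsub>M\<^esub> (b \<otimes> c) = ((a \<otimes>\<^bsub>M\<^esub> b) \<otimes> inv a) \<otimes> (a \<otimes>\<^bsub>M\<^esub> c)"
begin

lemma mc[simp]: "a \<in> carrier A \<Longrightarrow> b \<in> carrier A \<Longrightarrow> a \<otimes>\<^bsub>M\<^esub> b \<in> carrier A"
  using M.m_closed carr by auto

lemma one_eq: "\<one>\<^bsub>M\<^esub> = \<one>"
proof -
  have o: "\<one>\<^bsub>M\<^esub> \<in> carrier A" using carr by auto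
  have e: "\<one>\<^bsub>M\<^esub> \<otimes>\<^bsub>M\<^esub> \<one> = \<one>" using carr M.l_one by auto
  have "\<one>\<^bsub>M\<^esub> \<otimes>\<^bsub>M\<^esub> (\<one> \<otimes> \<one>) = ((\<one>\<^bsub>M\<^esub> \<otimes>\<^bsub>M\<^esub> \<one>) \<otimes> inv \<one>\<^bsub>M\<^esub>) \<otimes> (\<one>\<^bsub>M\<^esub> \<otimes>\<^bsub>M\<^esub> \<one>)"
    using distr[OF o A.one_closed A.one_closed] .
  then have "\<one> = inv \<one>\<^bsub>M\<^esub>" using o by (simp add: e)
  then show ?thesis using o by (metis A.inv_inv A.inv_one)
qed

lemma Mone[simp]: "a \<in> carrier A \<Longrightarrow> a \<otimes>\<^bsub>M\<^esub> \<one> = a" "a \<in> carrier A \<Longrightarrow> \<one> \<otimes>\<^bsub>M\<^esub> a = a"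
  using one_eq carr by (metis M.r_one, metis M.l_one)

lemma Minv[simp]: "a \<in> carrier A \<Longrightarrow> inv\<^bsub>M\<^esub> a \<in> carrier A"
  "a \<in> carrier A \<Longrightarrow> a \<otimes>\<^bsub>M\<^esub> inv\<^bsub>M\<^esub> a = \<one>"
  "a \<in> carrier A \<Longrightarrow> inv\<^bsub>M\<^esub> a \<otimes>\<^bsub>M\<^esub> a = \<one>"
  using one_eq carr by auto

lemma canc[simp]: "p \<in> carrier A \<Longrightarrow> y \<in> carrier A \<Longrightarrow> p \<otimes> (inv p \<otimes> y) = y"
  "p \<in> carrier A \<Longrightarrow> y \<in> carrier A \<Longrightarrow> inv p \<otimes> (p \<otimes> y) = y"
  by (simp_all add: A.m_assoc[symmetric])

lemma Massoc: "a \<in> carrier A \<Longrightarrow> b \<in> carrier A \<Longrightarrow> c \<in> carrier A \<Longrightarrow>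
   a \<otimes>\<^bsub>M\<^esub> b \<otimes>\<^bsub>M\<^esub> c = a \<otimes>\<^bsub>M\<^esub> (b \<otimes>\<^bsub>M\<^esub> c)"
  using carr M.m_assoc by auto

lemma fwd:
  assumes PC: "P \<subseteq> carrier A" and par: "paragon A M P" and pP: "p \<in> P"
  shows "sb_ideal A M {w \<in> carrier A. w \<otimes> p \<in> P}"
proof -
  define N where "N = {w \<in> carrier A. w \<otimes> p \<in> P}"
  have pc: "p \<in> carrier A" using PC pP by auto
  have sh: "\<And>x y z. x \<in> P \<Longrightarrow> y \<in> P \<Longrightarrow> z \<in> P \<Longrightarrow> x \<otimes> inv y \<otimes> z \<in> P"
    using par unfolding paragon_def normal_subheap_def subheap_def hbr_def by blast
  have nsh: "\<And>a e s. a \<in> carrier A \<Longrightarrow> e \<in> P \<Longrightarrow> s \<in> P \<Longrightarrow> a \<otimes> inv e \<otimes> s \<otimes> inv a \<otimes> e \<in> P"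
    using par unfolding paragon_def normal_subheap_def subheap_def hbr_def by blast
  have cl: "closed_subheap A M (heap_class A P \<one>)"
    using par unfolding paragon_def by auto
  have cls: "heap_class A P \<one> = N"
  proof (intro Set.set_eqI iffI)
    fix b assume "b \<in> heap_class A P \<one>"
    then obtain s where b: "b \<in> carrier A" and s: "s \<in> P" and r: "inv b \<otimes> s \<in> P"
      unfolding heap_class_def heap_rel_def hbr_def by auto
    have sc: "s \<in> carrier A" using s PC by auto
    have "s \<otimes> inv (inv b \<otimes> s) \<otimes> p \<in> P" using sh[OF s r pP] .
    also have "s \<otimes> inv (inv b \<otimes> s) = b" using b sc by (simp add: A.inv_mult_group A.m_assoc[symmetric])
    finally show "b \<in> N" unfolding N_def using b by auto
  next
    fix b assume "b \<in> N"
    then have b: "b \<in> carrier A" and q: "b \<otimes> p \<in> P" unfolding N_def by auto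
    have "p \<otimes> inv (b \<otimes> p) \<otimes> p \<in> P" using sh[OF pP q pP] .
    also have "p \<otimes> inv (b \<otimes> p) \<otimes> p = \<one> \<otimes> inv b \<otimes> p" using b pc
      by (simp add: A.inv_mult_group A.m_assoc[symmetric])
    finally show "b \<in> heap_class A P \<one>" unfolding heap_class_def heap_rel_def hbr_def using b pP by auto
  qed
  have cl1: "\<And>s s' t. s \<in> N \<Longrightarrow> s' \<in> N \<Longrightarrow> t \<in> carrier A \<Longrightarrow>
        (t \<otimes>\<^bsub>M\<^esub> s') \<otimes> inv (t \<otimes>\<^bsub>M\<^esub> s) \<otimes> s \<in> N \<and> (s' \<otimes>\<^bsub>M\<^esub> t) \<otimes> inv (s \<otimes>\<^bsub>M\<^esub> t) \<otimes> s \<in> N"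
    using cl unfolding cls closed_subheap_def hbr_def by blast
  have Nc: "N \<subseteq> carrier A" unfolding N_def by auto
  have oN: "\<one> \<in> N" unfolding N_def using pc pP by auto
  have lam: "\<And>a n. a \<in> carrier A \<Longrightarrow> n \<in> N \<Longrightarrow> (a \<otimes>\<^bsub>M\<^esub> n) \<otimes> inv a \<in> N"
    using cl1[OF oN] Nc by fastforce
  have rho: "\<And>a n. a \<in> carrier A \<Longrightarrow> n \<in> N \<Longrightarrow> (n \<otimes>\<^bsub>M\<^esub> a) \<otimes> inv a \<in> N"
    using cl1[OF oN] Nc by fastforce
  have sg: "subgroup N A"
  proof (rule A.subgroupI)
    show "N \<subseteq> carrier A" by fact
    show "N \<noteq> {}" using oN by auto
  next
    fix a assume "a \<in> N"
    then have a: "a \<in> carrier A" and q: "a \<otimes> p \<in> P" unfolding N_def by auto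
    have "p \<otimes> inv (a \<otimes> p) \<otimes> p \<in> P" using sh[OF pP q pP] .
    also have "p \<otimes> inv (a \<otimes> p) \<otimes> p = inv a \<otimes> p" using a pc
      by (simp add: A.inv_mult_group A.m_assoc[symmetric])
    finally show "inv a \<in> N" unfolding N_def using a by auto
  next
    fix a b assume "a \<in> N" "b \<in> N"
    then have a: "a \<in> carrier A" and qa: "a \<otimes> p \<in> P" and b: "b \<in> carrier A" and qb: "b \<otimes> p \<in> P"
      unfolding N_def by auto
    have "a \<otimes> p \<otimes> inv p \<otimes> (b \<otimes> p) \<in> P" using sh[OF qa pP qb] .
    also have "a \<otimes> p \<otimes> inv p \<otimes> (b \<otimes> p) = a \<otimes> b \<otimes> p" using a b pc
      by (simp add: A.m_assoc)
    finally show "a \<otimes> b \<in> N" unfolding N_def using a b by auto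
  qed
  have nrm: "N \<lhd> A"
    unfolding A.normal_inv_iff
  proof (intro conjI sg ballI)
    fix x h assume x: "x \<in> carrier A" and "h \<in> N"
    then have h: "h \<in> carrier A" and q: "h \<otimes> p \<in> P" unfolding N_def by auto
    show "x \<otimes> h \<otimes> inv x \<in> N"
    proof -
      have "x \<otimes> p \<otimes> inv p \<otimes> (h \<otimes> p) \<otimes> inv (x \<otimes> p) \<otimes> p \<in> P" using nsh[OF _ pP q] x pc by simp
      also have "x \<otimes> p \<otimes> inv p \<otimes> (h \<otimes> p) \<otimes> inv (x \<otimes> p) \<otimes> p = x \<otimes> h \<otimes> inv x \<otimes> p"
        using x h pc by (simp add: A.m_assoc A.inv_mult_group)
      finally show ?thesis unfolding N_def using x h by auto
    qed
  qed
  have img: "\<And>a. a \<in> carrier A \<Longrightarrow> (\<lambda>x. a \<otimes>\<^bsub>M\<^esub> x) ` N = (\<lambda>x. x \<otimes>\<^bsub>M\<^esub> a) ` N"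
  proof -
    fix a assume a: "a \<in> carrier A"
    define u where "u = inv\<^bsub>M\<^esub> a"
    have u: "u \<in> carrier A" "a \<otimes>\<^bsub>M\<^esub> u = \<one>" "u \<otimes>\<^bsub>M\<^esub> a = \<one>" using a unfolding u_def by auto
    show "(\<lambda>x. a \<otimes>\<^bsub>M\<^esub> x) ` N = (\<lambda>x. x \<otimes>\<^bsub>M\<^esub> a) ` N"
    proof (intro Set.set_eqI iffI)
      fix y assume "y \<in> (\<lambda>x. a \<otimes>\<^bsub>M\<^esub> x) ` N"
      then obtain n where n: "n \<in> N" and y: "y = a \<otimes>\<^bsub>M\<^esub> n" by auto
      have nc: "n \<in> carrier A" using n Nc by auto
      define m1 where "m1 = (n \<otimes>\<^bsub>M\<^esub> u) \<otimes> inv u"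
      have m1: "m1 \<in> N" unfolding m1_def using rho[OF u(1) n] .
      have m1c: "m1 \<in> carrier A" using m1 Nc by auto
      have nu: "n \<otimes>\<^bsub>M\<^esub> u = m1 \<otimes> u" unfolding m1_def using nc u by (simp add: A.m_assoc)
      have "a \<otimes>\<^bsub>M\<^esub> (m1 \<otimes> u) = (a \<otimes>\<^bsub>M\<^esub> m1) \<otimes> inv a \<otimes> (a \<otimes>\<^bsub>M\<^esub> u)"
        using distr a m1c u by auto
      then have e: "a \<otimes>\<^bsub>M\<^esub> n \<otimes>\<^bsub>M\<^esub> u = (a \<otimes>\<^bsub>M\<^esub> m1) \<otimes> inv a"
        using u a nc m1c by (simp add: Massoc nu)
      have k: "a \<otimes>\<^bsub>M\<^esub> n \<otimes>\<^bsub>M\<^esub> u \<in> N" unfolding e using lam[OF a m1] .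
      have "y = (a \<otimes>\<^bsub>M\<^esub> n \<otimes>\<^bsub>M\<^esub> u) \<otimes>\<^bsub>M\<^esub> a" using y u a nc by (simp add: Massoc)
      then show "y \<in> (\<lambda>x. x \<otimes>\<^bsub>M\<^esub> a) ` N" using k by auto
    next
      fix y assume "y \<in> (\<lambda>x. x \<otimes>\<^bsub>M\<^esub> a) ` N"
      then obtain n where n: "n \<in> N" and y: "y = n \<otimes>\<^bsub>M\<^esub> a" by auto
      have nc: "n \<in> carrier A" using n Nc by auto
      define m where "m = (n \<otimes>\<^bsub>M\<^esub> a) \<otimes> inv a"
      have m: "m \<in> N" unfolding m_def using rho[OF a n] .
      have mc: "m \<in> carrier A" using m Nc by auto
      have na: "n \<otimes>\<^bsub>M\<^esub> a = m \<otimes> a" unfolding m_def using nc a by (simp add: A.m_assoc)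
      have "u \<otimes>\<^bsub>M\<^esub> (m \<otimes> a) = (u \<otimes>\<^bsub>M\<^esub> m) \<otimes> inv u \<otimes> (u \<otimes>\<^bsub>M\<^esub> a)"
        using distr a mc u by auto
      then have e: "u \<otimes>\<^bsub>M\<^esub> (n \<otimes>\<^bsub>M\<^esub> a) = (u \<otimes>\<^bsub>M\<^esub> m) \<otimes> inv u"
        using u a nc mc by (simp add: na)
      have k: "u \<otimes>\<^bsub>M\<^esub> (n \<otimes>\<^bsub>M\<^esub> a) \<in> N" unfolding e using lam[OF u(1) m] .
      have "y = a \<otimes>\<^bsub>M\<^esub> (u \<otimes>\<^bsub>M\<^esub> (n \<otimes>\<^bsub>M\<^esub> a))" using y u a nc
        by (simp add: Massoc[symmetric])
      then show "y \<in> (\<lambda>x. a \<otimes>\<^bsub>M\<^esub> x) ` N" using k by auto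
    qed
  qed
  show ?thesis unfolding N_def[symmetric] sb_ideal_def using nrm img lam by auto
qed

lemma bwd:
  assumes PC: "P \<subseteq> carrier A" and ne: "P \<noteq> {}"
    and H: "\<forall>p\<in>P. sb_ideal A M {w \<in> carrier A. w \<otimes> p \<in> P}"
  shows "paragon A M P"
proof -
  define NN where "NN e = {w \<in> carrier A. w \<otimes> e \<in> P}" for e
  have mem: "\<And>w e. w \<in> NN e \<longleftrightarrow> w \<in> carrier A \<and> w \<otimes> e \<in> P" unfolding NN_def by auto
  have nrm: "\<And>e. e \<in> P \<Longrightarrow> NN e \<lhd> A" using H unfolding sb_ideal_def NN_def by auto
  have sg: "\<And>e. e \<in> P \<Longrightarrow> subgroup (NN e) A" using nrm A.normal_invE(1) by blast
  have cj: "\<And>e x h. e \<in> P \<Longrightarrow> x \<in> carrier A \<Longrightarrow> h \<in> NN e \<Longrightarrow> x \<otimes> h \<otimes> inv x \<in> NN e"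
    using nrm A.normal_invE(2) by blast
  have lam: "\<And>e a b. e \<in> P \<Longrightarrow> a \<in> carrier A \<Longrightarrow> b \<in> NN e \<Longrightarrow> (a \<otimes>\<^bsub>M\<^esub> b) \<otimes> inv a \<in> NN e"
    using H unfolding sb_ideal_def NN_def by auto
  have img: "\<And>e a. e \<in> P \<Longrightarrow> a \<in> carrier A \<Longrightarrow> (\<lambda>x. a \<otimes>\<^bsub>M\<^esub> x) ` NN e = (\<lambda>x. x \<otimes>\<^bsub>M\<^esub> a) ` NN e"
    using H unfolding sb_ideal_def NN_def by auto
  have sub: "\<And>s p. s \<in> P \<Longrightarrow> p \<in> P \<Longrightarrow> NN s \<subseteq> NN p"
  proof
    fix s p w assume s: "s \<in> P" and p: "p \<in> P" and w: "w \<in> NN s"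
    have sc: "s \<in> carrier A" and pc: "p \<in> carrier A" using s p PC by auto
    have wc: "w \<in> carrier A" and ws: "w \<otimes> s \<in> P" using w mem by auto
    have 1: "w \<otimes> s \<otimes> inv p \<in> NN p" using mem wc sc pc ws by (simp add: A.m_assoc)
    have 2: "s \<otimes> inv p \<in> NN p" using mem sc pc s by (simp add: A.m_assoc)
    have "(w \<otimes> s \<otimes> inv p) \<otimes> inv (s \<otimes> inv p) \<in> NN p"
      using 1 2 sg[OF p] by (simp add: subgroup.m_closed subgroup.m_inv_closed)
    also have "(w \<otimes> s \<otimes> inv p) \<otimes> inv (s \<otimes> inv p) = w"
      using wc sc pc by (simp add: A.m_assoc A.inv_mult_group)
    finally show "w \<in> NN p" .
  qed
  have indep: "\<And>s p. s \<in> P \<Longrightarrow> p \<in> P \<Longrightarrow> NN s = NN p" using sub by blast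
  obtain p0 where p0: "p0 \<in> P" using ne by auto
  define N where "N = NN p0"
  have Nc: "N \<subseteq> carrier A" unfolding N_def NN_def by auto
  have sgN: "subgroup N A" unfolding N_def using sg[OF p0] .
  have shP: "subheap A P"
    unfolding subheap_def hbr_def
  proof (intro conjI ne PC ballI)
    fix x y z assume x: "x \<in> P" and y: "y \<in> P" and z: "z \<in> P"
    have xc: "x \<in> carrier A" and yc: "y \<in> carrier A" using x y PC by auto
    have "x \<otimes> inv y \<in> NN y" using x xc yc mem by (simp add: A.m_assoc)
    then have "x \<otimes> inv y \<in> NN z" using indep[OF y z] by simp
    then show "x \<otimes> inv y \<otimes> z \<in> P" using mem by auto
  qed
  have nshP: "normal_subheap A P"
    unfolding normal_subheap_def
  proof (intro conjI shP ballI)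
    fix a e s assume a: "a \<in> carrier A" and e: "e \<in> P" and s: "s \<in> P"
    have ec: "e \<in> carrier A" and sc: "s \<in> carrier A" using e s PC by auto
    have h: "s \<otimes> inv e \<in> NN e" using mem sc ec s by (simp add: A.m_assoc)
    have "(a \<otimes> inv e) \<otimes> (s \<otimes> inv e) \<otimes> inv (a \<otimes> inv e) \<in> NN e" using cj[OF e _ h] a ec by simp
    then have "(a \<otimes> inv e) \<otimes> (s \<otimes> inv e) \<otimes> inv (a \<otimes> inv e) \<otimes> e \<in> P" using mem by auto
    also have "(a \<otimes> inv e) \<otimes> (s \<otimes> inv e) \<otimes> inv (a \<otimes> inv e) \<otimes> e = hbr A (hbr A a e s) a e"
      unfolding hbr_def using a ec sc by (simp add: A.m_assoc A.inv_mult_group)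
    finally show "hbr A (hbr A a e s) a e \<in> P" .
  qed
  have cm: "\<And>a b. a \<in> carrier A \<Longrightarrow> b \<in> heap_class A P a \<longleftrightarrow> b \<in> carrier A \<and> a \<otimes> inv b \<in> N"
  proof -
    fix a b assume a: "a \<in> carrier A"
    show "b \<in> heap_class A P a \<longleftrightarrow> b \<in> carrier A \<and> a \<otimes> inv b \<in> N"
    proof
      assume "b \<in> heap_class A P a"
      then obtain s where b: "b \<in> carrier A" and s: "s \<in> P" and r: "a \<otimes> inv b \<otimes> s \<in> P"
        unfolding heap_class_def heap_rel_def hbr_def by auto
      have "a \<otimes> inv b \<in> NN s" using mem r a b by simp
      then show "b \<in> carrier A \<and> a \<otimes> inv b \<in> N" unfolding N_def using indep[OF s p0] b by simp
    next
      assume b: "b \<in> carrier A \<and> a \<otimes> inv b \<in> N"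
      then have "a \<otimes> inv b \<otimes> p0 \<in> P" unfolding N_def using mem by simp
      then show "b \<in> heap_class A P a"
        unfolding heap_class_def heap_rel_def hbr_def using b p0 by auto
    qed
  qed
  have cls: "closed_subheap A M (heap_class A P a)" if a: "a \<in> carrier A" for a
    unfolding closed_subheap_def subheap_def
  proof (intro conjI ballI)
    show "heap_class A P a \<noteq> {}" using cm[OF a, of a] a subgroup.one_closed[OF sgN] by auto
    show "heap_class A P a \<subseteq> carrier A" unfolding heap_class_def by auto
  next
    fix x y z assume "x \<in> heap_class A P a" "y \<in> heap_class A P a" "z \<in> heap_class A P a"
    then have x: "x \<in> carrier A" "a \<otimes> inv x \<in> N" and y: "y \<in> carrier A" "a \<otimes> inv y \<in> N"
      and z: "z \<in> carrier A" "a \<otimes> inv z \<in> N" using cm[OF a] by auto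
    have "(a \<otimes> inv z) \<otimes> inv (a \<otimes> inv y) \<otimes> (a \<otimes> inv x) \<in> N"
      using x y z sgN by (simp add: subgroup.m_closed subgroup.m_inv_closed)
    also have "(a \<otimes> inv z) \<otimes> inv (a \<otimes> inv y) \<otimes> (a \<otimes> inv x) = a \<otimes> inv (hbr A x y z)"
      unfolding hbr_def using a x y z by (simp add: A.m_assoc A.inv_mult_group)
    finally show "hbr A x y z \<in> heap_class A P a" using cm[OF a] x y z unfolding hbr_def by simp
  next
    fix s s' t assume "s \<in> heap_class A P a" "s' \<in> heap_class A P a" and t: "t \<in> carrier A"
    then have s: "s \<in> carrier A" "a \<otimes> inv s \<in> N" and s': "s' \<in> carrier A" "a \<otimes> inv s' \<in> N"
      using cm[OF a] by auto
    define n where "n = inv (a \<otimes> inv s) \<otimes> (a \<otimes> inv s')"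
    have nN: "n \<in> N" unfolding n_def using s s' sgN by (simp add: subgroup.m_closed subgroup.m_inv_closed)
    have nc: "n \<in> carrier A" using nN Nc by auto
    have sn: "s = n \<otimes> s'" unfolding n_def using a s s' by (simp add: A.m_assoc A.inv_mult_group)
    define k where "k = (t \<otimes>\<^bsub>M\<^esub> n) \<otimes> inv t"
    have kN: "k \<in> N" unfolding k_def N_def using lam[OF p0 t] nN N_def by auto
    have kc: "k \<in> carrier A" using kN Nc by auto
    have ts: "t \<otimes>\<^bsub>M\<^esub> s = k \<otimes> (t \<otimes>\<^bsub>M\<^esub> s')" unfolding sn k_def using distr t nc s' by auto
    have "(a \<otimes> inv s) \<otimes> k \<in> N" using s kN sgN by (simp add: subgroup.m_closed)
    also have "(a \<otimes> inv s) \<otimes> k = a \<otimes> inv (hbr A (t \<otimes>\<^bsub>M\<^esub> s') (t \<otimes>\<^bsub>M\<^esub> s) s)"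
      unfolding hbr_def ts using a s s' t kc by (simp add: A.m_assoc A.inv_mult_group)
    finally show "hbr A (t \<otimes>\<^bsub>M\<^esub> s') (t \<otimes>\<^bsub>M\<^esub> s) s \<in> heap_class A P a"
      using cm[OF a] s s' t unfolding hbr_def by simp
    define u where "u = inv\<^bsub>M\<^esub> s'"
    have u: "u \<in> carrier A" "s' \<otimes>\<^bsub>M\<^esub> u = \<one>" "u \<otimes>\<^bsub>M\<^esub> s' = \<one>" using s' unfolding u_def by auto
    define x where "x = u \<otimes>\<^bsub>M\<^esub> s"
    have xe: "x = (u \<otimes>\<^bsub>M\<^esub> n) \<otimes> inv u" unfolding x_def sn using distr u nc s' by auto
    have xN: "x \<in> N" unfolding xe N_def using lam[OF p0 u(1)] nN N_def by auto
    have sx: "s = s' \<otimes>\<^bsub>M\<^esub> x" unfolding x_def using u s s' by (simp add: Massoc[symmetric])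
    have "x \<otimes>\<^bsub>M\<^esub> t \<in> (\<lambda>z. z \<otimes>\<^bsub>M\<^esub> t) ` N" using xN by auto
    then have "x \<otimes>\<^bsub>M\<^esub> t \<in> (\<lambda>z. t \<otimes>\<^bsub>M\<^esub> z) ` N" using img[OF p0 t] N_def by auto
    then obtain y where yN: "y \<in> N" and xt: "x \<otimes>\<^bsub>M\<^esub> t = t \<otimes>\<^bsub>M\<^esub> y" by auto
    have yc: "y \<in> carrier A" and xc: "x \<in> carrier A" using yN xN Nc by auto
    define c where "c = s' \<otimes>\<^bsub>M\<^esub> t"
    have cc: "c \<in> carrier A" unfolding c_def using s' t by simp
    have st: "s \<otimes>\<^bsub>M\<^esub> t = c \<otimes>\<^bsub>M\<^esub> y" unfolding sx c_def using s' xc t yc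
      by (simp add: Massoc xt)
    define m where "m = (c \<otimes>\<^bsub>M\<^esub> y) \<otimes> inv c"
    have mN: "m \<in> N" unfolding m_def N_def using lam[OF p0 cc] yN N_def by auto
    have mc: "m \<in> carrier A" using mN Nc by auto
    have st2: "s \<otimes>\<^bsub>M\<^esub> t = m \<otimes> c" unfolding st m_def using cc yc by (simp add: A.m_assoc)
    have "(a \<otimes> inv s) \<otimes> m \<in> N" using s mN sgN by (simp add: subgroup.m_closed)
    also have "(a \<otimes> inv s) \<otimes> m = a \<otimes> inv (hbr A (s' \<otimes>\<^bsub>M\<^esub> t) (s \<otimes>\<^bsub>M\<^esub> t) s)"
      unfolding hbr_def st2 c_def[symmetric] using a s cc mc by (simp add: A.m_assoc A.inv_mult_group)
    finally show "hbr A (s' \<otimes>\<^bsub>M\<^esub> t) (s \<otimes>\<^bsub>M\<^esub> t) s \<in> heap_class A P a"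
      using cm[OF a] s s' t unfolding hbr_def by simp
  qed
  show ?thesis unfolding paragon_def using ne nshP cls by auto
qed

end

lemma Nset_eq:
  assumes "sbr A M" "P \<subseteq> carrier A" "p \<in> carrier A"
  shows "{hbr A q p \<one>\<^bsub>M\<^esub> | q. q \<in> P} = {w \<in> carrier A. w \<otimes>\<^bsub>A\<^esub> p \<in> P}"
proof -
  interpret sbr A M by fact
  show ?thesis
  proof (intro Set.set_eqI iffI)
    fix w assume "w \<in> {hbr A q p \<one>\<^bsub>M\<^esub> | q. q \<in> P}"
    then obtain q where q: "q \<in> P" and w: "w = q \<otimes>\<^bsub>A\<^esub> inv\<^bsub>A\<^esub> p"
      unfolding hbr_def one_eq using assms(2,3) by auto
    have qc: "q \<in> carrier A" using q assms(2) by auto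
    show "w \<in> {w \<in> carrier A. w \<otimes>\<^bsub>A\<^esub> p \<in> P}" using w q qc assms(3) by (simp add: A.m_assoc)
  next
    fix w assume "w \<in> {w \<in> carrier A. w \<otimes>\<^bsub>A\<^esub> p \<in> P}"
    then have w: "w \<in> carrier A" "w \<otimes>\<^bsub>A\<^esub> p \<in> P" by auto
    have "w = hbr A (w \<otimes>\<^bsub>A\<^esub> p) p \<one>\<^bsub>M\<^esub>" unfolding hbr_def one_eq using w assms(3)
      by (simp add: A.m_assoc)
    then show "w \<in> {hbr A q p \<one>\<^bsub>M\<^esub> | q. q \<in> P}" using w by blast
  qed
qed

theorem lemma3p16:
  fixes A M :: "'a monoid" and P :: "'a set"
  assumes "skew_brace A M" and "P \<subseteq> carrier A" and "P \<noteq> {}"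
  shows "paragon A M P \<longleftrightarrow>
    (\<forall>p\<in>P. sb_ideal A M {hbr A q p \<one>\<^bsub>M\<^esub> | q. q \<in> P})"
proof -
  have S: "sbr A M" using assms(1) unfolding skew_brace_def sbr_def sbr_axioms_def
    by (auto simp: group.axioms)
  interpret sbr A M by (rule S)
  have E: "\<And>p. p \<in> P \<Longrightarrow> {hbr A q p \<one>\<^bsub>M\<^esub> | q. q \<in> P} = {w \<in> carrier A. w \<otimes>\<^bsub>A\<^esub> p \<in> P}"
    using Nset_eq[OF S assms(2)] assms(2) by auto
  show ?thesis
  proof
    assume "paragon A M P" then show "\<forall>p\<in>P. sb_ideal A M {hbr A q p \<one>\<^bsub>M\<^esub> | q. q \<in> P}"
      using fwd assms E by auto
  next
    assume "\<forall>p\<in>P. sb_ideal A M {hbr A q p \<one>\<^bsub>M\<^esub> | q. q \<in> P}"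
    then show "paragon A M P" using bwd assms E by auto
  qed
qed

end
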